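(* Let $H$ be a complex Hilbert space and let $A$ and $B$ be self-adjoint operators in $H$, at least one of which is positive, such that $D(A)=D(B)$ and $D(BA)\subset D(AB)$. Let $T=A+iB$ (with domain $D(A)=D(B)$). If $T^2\subset 0$, then $T\in B(H)$, $T$ is normal, and $T=0$ everywhere on $H$.
   Context: Products are taken on natural domains $D(ST)=\{x\in D(T):Tx\in D(S)\}$ and sums on $D(S+T)=D(S)\cap D(T)$. $S\subset T$ means $D(S)\subset D(T)$ and $S=T$ on $D(S)$; $T^2\subset 0$ means $T^2x=0$ for all $x\in D(T^2)$, where $0$ is the zero operator on $H$. A self-adjoint $A$ is positive if $\langle Ax,x\rangle\geq 0$ for all $x\in D(A)$. $B(H)$ is the algebra of everywhere defined bounded operators on $H$; a closed densely defined $T$ is normal if $TT^*=T^*T$. *)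

theory Defs
  imports "HOL-Analysis.Analysis"
begin

text \<open>A complex Hilbert space structure on a real Banach space type 'a:
  a complex scalar multiplication sc extending the real one, and an inner
  product ip (linear in the first, conjugate linear in the second argument)
  inducing the given norm (hence the given topology; completeness from banach).\<close>

definition complex_hilbert :: "(complex \<Rightarrow> 'a::banach \<Rightarrow> 'a) \<Rightarrow> ('a \<Rightarrow> 'a \<Rightarrow> complex) \<Rightarrow> bool" where
  "complex_hilbert sc ip \<longleftrightarrow>
     (\<forall>r x. sc (complex_of_real r) x = scaleR r x) \<and>
     (\<forall>a x y. sc a (x + y) = sc a x + sc a y) \<and>
     (\<forall>a b x. sc (a + b) x = sc a x + sc b x) \<and>
     (\<forall>a b x. sc (a * b) x = sc a (sc b x)) \<and>
     (\<forall>x y z. ip (x + y) z = ip x z + ip y z) \<and>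
     (\<forall>a x y. ip (sc a x) y = a * ip x y) \<and>
     (\<forall>x y. ip y x = cnj (ip x y)) \<and>
     (\<forall>x. ip x x = complex_of_real ((norm x)\<^sup>2))"

type_synonym 'a opr = "'a set \<times> ('a \<Rightarrow> 'a)"

definition dom_op :: "'a opr \<Rightarrow> 'a set" where "dom_op T = fst T"
definition app_op :: "'a opr \<Rightarrow> 'a \<Rightarrow> 'a" where "app_op T = snd T"

definition comp_op :: "'a opr \<Rightarrow> 'a opr \<Rightarrow> 'a opr" where
  "comp_op S T = ({x \<in> dom_op T. app_op T x \<in> dom_op S}, \<lambda>x. app_op S (app_op T x))"

definition op_sub :: "'a opr \<Rightarrow> 'a opr \<Rightarrow> bool" where
  "op_sub S T \<longleftrightarrow> dom_op S \<subseteq> dom_op T \<and> (\<forall>x\<in>dom_op S. app_op S x = app_op T x)"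

definition op_eq :: "'a opr \<Rightarrow> 'a opr \<Rightarrow> bool" where
  "op_eq S T \<longleftrightarrow> op_sub S T \<and> op_sub T S"

definition densely_defined :: "'a::topological_space opr \<Rightarrow> bool" where
  "densely_defined T \<longleftrightarrow> closure (dom_op T) = UNIV"

definition closed_op :: "'a::topological_space opr \<Rightarrow> bool" where
  "closed_op T \<longleftrightarrow> closed {(x, app_op T x) | x. x \<in> dom_op T}"

text \<open>Hilbert adjoint (meaningful for densely defined T).\<close>
definition adjoint_op :: "('a \<Rightarrow> 'a \<Rightarrow> complex) \<Rightarrow> 'a opr \<Rightarrow> 'a opr" where
  "adjoint_op ip T =
    ({y. \<exists>z. \<forall>x\<in>dom_op T. ip (app_op T x) y = ip x z},
     \<lambda>y. THE z. \<forall>x\<in>dom_op T. ip (app_op T x) y = ip x z)"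

definition self_adjoint :: "('a::topological_space \<Rightarrow> 'a \<Rightarrow> complex) \<Rightarrow> 'a opr \<Rightarrow> bool" where
  "self_adjoint ip A \<longleftrightarrow> densely_defined A \<and> op_eq A (adjoint_op ip A)"

definition positive_op :: "('a::topological_space \<Rightarrow> 'a \<Rightarrow> complex) \<Rightarrow> 'a opr \<Rightarrow> bool" where
  "positive_op ip A \<longleftrightarrow> self_adjoint ip A \<and>
     (\<forall>x\<in>dom_op A. Im (ip (app_op A x) x) = 0 \<and> Re (ip (app_op A x) x) \<ge> 0)"

definition normal_op :: "('a::topological_space \<Rightarrow> 'a \<Rightarrow> complex) \<Rightarrow> 'a opr \<Rightarrow> bool" where
  "normal_op ip T \<longleftrightarrow> closed_op T \<and> densely_defined T \<and>
     op_eq (comp_op T (adjoint_op ip T)) (comp_op (adjoint_op ip T) T)"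

definition bounded_everywhere :: "'a::real_normed_vector opr \<Rightarrow> bool" where
  "bounded_everywhere T \<longleftrightarrow> dom_op T = UNIV \<and> (\<exists>C. \<forall>x. norm (app_op T x) \<le> C * norm x)"

end

theory Submission
  imports Defs
begin

lemma quad_zero:
  fixes p q :: real
  assumes "\<forall>t. 0 \<le> 2*t*p + t^2*q" and "0 \<le> q"
  shows "p = 0"
proof -
  define t where "t = - p / (q+1)"
  have q1: "q + 1 > 0" using assms(2) by simp
  have tq: "t*(q+1) = -p" unfolding t_def using q1 by simp
  have "0 \<le> 2*t*p + t^2*q" using assms(1) by blast
  hence "0 \<le> (2*t*p + t^2*q) * (q+1)^2" by simp
  also have "(2*t*p + t^2*q) * (q+1)^2 = 2*p*(q+1)*(t*(q+1)) + q*(t*(q+1))^2"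
    by (simp add: algebra_simps power2_eq_square)
  also have "\<dots> = -(p^2*(q+2))" unfolding tq by (simp add: algebra_simps power2_eq_square)
  finally have "p^2*(q+2) \<le> 0" by simp
  moreover have "q + 2 > 0" using assms(2) by simp
  ultimately have "p^2 \<le> 0" by (simp add: mult_le_0_iff)
  thus ?thesis by simp
qed

locale chs =
  fixes sc :: "complex \<Rightarrow> 'a::banach \<Rightarrow> 'a" and ip :: "'a \<Rightarrow> 'a \<Rightarrow> complex"
  assumes H: "complex_hilbert sc ip"
begin

lemma sc_real: "sc (complex_of_real r) x = scaleR r x"
  and sc_add: "sc a (x + y) = sc a x + sc a y"
  and sc_addl: "sc (a + b) x = sc a x + sc b x"
  and sc_mult: "sc (a * b) x = sc a (sc b x)"
  and ip_addl: "ip (x + y) z = ip x z + ip y z"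
  and ip_scl: "ip (sc a x) y = a * ip x y"
  and ip_cnj: "ip y x = cnj (ip x y)"
  and ip_self: "ip x x = complex_of_real ((norm x)\<^sup>2)"
  using H unfolding complex_hilbert_def by blast+

lemma ip_addr: "ip x (y + z) = ip x y + ip x z"
  by (metis ip_cnj ip_addl complex_cnj_add)

lemma ip_scr: "ip x (sc a y) = cnj a * ip x y"
  by (metis ip_cnj ip_scl complex_cnj_mult)

lemma ip_zero_l[simp]: "ip 0 y = 0"
  using ip_addl[of 0 0 y] by simp

lemma ip_zero_r[simp]: "ip x 0 = 0"
  by (metis ip_cnj ip_zero_l complex_cnj_zero)

lemma ip_minus_l: "ip (- x) y = - ip x y"
  using ip_addl[of x "-x" y] by (simp add: eq_neg_iff_add_eq_0 add.commute)

lemma ip_minus_r: "ip x (- y) = - ip x y"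
  by (metis ip_cnj ip_minus_l complex_cnj_minus)

lemma ip_diff_l: "ip (x - y) z = ip x z - ip y z"
  using ip_addl[of x "-y" z] ip_minus_l by simp

lemma ip_diff_r: "ip x (y - z) = ip x y - ip x z"
  using ip_addr[of x y "-z"] ip_minus_r by simp

lemma sc_zero[simp]: "sc a 0 = 0"
  using sc_add[of a 0 0] by simp

lemma sc_one[simp]: "sc 1 x = x"
  using sc_real[of 1 x] by simp

lemma sc_minus: "sc a (- x) = - sc a x"
  using sc_add[of a x "-x"] by (simp add: eq_neg_iff_add_eq_0 add.commute)

lemma sc_diff: "sc a (x - y) = sc a x - sc a y"
  using sc_add[of a x "-y"] sc_minus by simp

lemma sc_neg1: "sc (-1) x = - x"
  using sc_real[of "-1" x] by simp

lemma ip_scaleR_l: "ip (scaleR r x) y = complex_of_real r * ip x y"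
  by (metis sc_real ip_scl)

lemma ip_scaleR_r: "ip x (scaleR r y) = complex_of_real r * ip x y"
  by (metis sc_real ip_scr complex_cnj_complex_of_real)

lemma norm_sq: "(norm x)\<^sup>2 = Re (ip x x)"
  using ip_self[of x] by simp

lemma Im_ip_self[simp]: "Im (ip x x) = 0"
  using ip_self[of x] by simp

lemma ip_self_zero: "ip x x = 0 \<longleftrightarrow> x = 0"
  using ip_self[of x] by simp

lemma sc_comm: "sc a (sc b x) = sc b (sc a x)"
  by (metis sc_mult mult.commute)

lemma norm_add_sq: "(norm (x + y))\<^sup>2 = (norm x)\<^sup>2 + (norm y)\<^sup>2 + 2 * Re (ip x y)"
proof -
  have "ip (x+y) (x+y) = ip x x + ip y y + ip x y + ip y x"
    by (simp add: ip_addl ip_addr)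
  hence "Re (ip (x+y) (x+y)) = Re (ip x x) + Re (ip y y) + 2 * Re (ip x y)"
    using ip_cnj[of x y] by simp
  thus ?thesis by (simp add: norm_sq)
qed

lemma norm_sc: "norm (sc a x) = cmod a * norm x"
proof -
  have "ip (sc a x) (sc a x) = (a * cnj a) * ip x x" by (simp add: ip_scl ip_scr)
  also have "\<dots> = complex_of_real ((cmod a * norm x)\<^sup>2)"
    by (simp add: ip_self complex_norm_square[symmetric] power_mult_distrib)
  finally have "(norm (sc a x))\<^sup>2 = (cmod a * norm x)\<^sup>2" by (simp add: norm_sq)
  thus ?thesis by (simp add: power2_eq_iff_nonneg)
qed

lemma bl_sc: "bounded_linear (sc a)"
  by (rule bounded_linear_intro[where K="cmod a"])
     (auto simp: sc_add norm_sc sc_real[symmetric] sc_comm)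

lemma Re_ip_sc_i: "Re (ip x (sc \<i> y)) = Im (ip x y)"
  by (simp add: ip_scr)

lemma Re_polar: "Re (ip x y) = ((norm (x + y))\<^sup>2 - (norm (x - y))\<^sup>2) / 4"
  using norm_add_sq[of x y] norm_add_sq[of x "-y"] ip_minus_r[of x y] by simp

lemma ip_tendsto:
  assumes f: "(f \<longlongrightarrow> x) F" and g: "(g \<longlongrightarrow> y) F"
  shows "((\<lambda>n. ip (f n) (g n)) \<longlongrightarrow> ip x y) F"
proof -
  have g': "((\<lambda>n. sc \<i> (g n)) \<longlongrightarrow> sc \<i> y) F"
    using bounded_linear.tendsto[OF bl_sc g] .
  have "((\<lambda>n. ((norm (f n + g n))\<^sup>2 - (norm (f n - g n))\<^sup>2) / 4) \<longlongrightarrow>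
        ((norm (x + y))\<^sup>2 - (norm (x - y))\<^sup>2) / 4) F"
    by (auto intro!: tendsto_intros f g)
  hence r: "((\<lambda>n. Re (ip (f n) (g n))) \<longlongrightarrow> Re (ip x y)) F"
    by (simp add: Re_polar)
  have "((\<lambda>n. ((norm (f n + sc \<i> (g n)))\<^sup>2 - (norm (f n - sc \<i> (g n)))\<^sup>2) / 4) \<longlongrightarrow>
        ((norm (x + sc \<i> y))\<^sup>2 - (norm (x - sc \<i> y))\<^sup>2) / 4) F"
    by (auto intro!: tendsto_intros f g')
  hence i: "((\<lambda>n. Im (ip (f n) (g n))) \<longlongrightarrow> Im (ip x y)) F"
    by (simp add: Re_polar[symmetric] Re_ip_sc_i)
  show ?thesis using r i by (simp add: tendsto_complex_iff)
qed

lemma dense_zero: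
  assumes d: "closure D = UNIV" and h: "\<forall>w\<in>D. ip v w = 0"
  shows "v = 0"
proof -
  have "v \<in> closure D" using d by simp
  then obtain x where x: "\<forall>n. x n \<in> D" "x \<longlonglongrightarrow> v"
    using closure_sequential by blast
  have "(\<lambda>n. ip v (x n)) \<longlonglongrightarrow> ip v v"
    using ip_tendsto[OF tendsto_const x(2)] .
  moreover have "(\<lambda>n. ip v (x n)) = (\<lambda>n. 0)" using h x(1) by auto
  ultimately have "ip v v = 0" using LIMSEQ_unique tendsto_const by metis
  thus ?thesis by (simp add: ip_self_zero)
qed

lemma dense_unique:
  assumes d: "closure D = UNIV" and h: "\<forall>x\<in>D. ip x z1 = ip x z2"
  shows "z1 = z2"
proof -
  have "\<forall>x\<in>D. ip (z1 - z2) x = 0"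
    using h by (metis ip_cnj ip_diff_r complex_cnj_zero diff_self)
  hence "z1 - z2 = 0" using dense_zero[OF d] by blast
  thus ?thesis by simp
qed

lemma sa_dense: "self_adjoint ip A \<Longrightarrow> closure (dom_op A) = UNIV"
  by (simp add: self_adjoint_def densely_defined_def)

lemma adj_dom: "y \<in> dom_op (adjoint_op ip A) \<longleftrightarrow> (\<exists>z. \<forall>x\<in>dom_op A. ip (app_op A x) y = ip x z)"
  by (simp add: adjoint_op_def dom_op_def)

lemma adj_app:
  assumes d: "closure (dom_op A) = UNIV" and h: "\<forall>x\<in>dom_op A. ip (app_op A x) y = ip x z"
  shows "app_op (adjoint_op ip A) y = z"
proof -
  have "app_op (adjoint_op ip A) y = (THE z. \<forall>x\<in>dom_op A. ip (app_op A x) y = ip x z)"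
    by (simp add: adjoint_op_def app_op_def)
  also have "\<dots> = z"
  proof (rule the_equality)
    show "\<forall>x\<in>dom_op A. ip (app_op A x) y = ip x z" by (rule h)
    fix z' assume "\<forall>x\<in>dom_op A. ip (app_op A x) y = ip x z'"
    thus "z' = z" using h dense_unique[OF d, of z' z] by simp
  qed
  finally show ?thesis .
qed

lemma sa_char:
  assumes sa: "self_adjoint ip A" and h: "\<forall>x\<in>dom_op A. ip (app_op A x) y = ip x z"
  shows "y \<in> dom_op A \<and> app_op A y = z"
proof -
  have d: "closure (dom_op A) = UNIV" using sa by (rule sa_dense)
  have sub: "op_sub (adjoint_op ip A) A" using sa by (simp add: self_adjoint_def op_eq_def)
  have y: "y \<in> dom_op (adjoint_op ip A)" using h adj_dom by blast
  have "app_op (adjoint_op ip A) y = z" using adj_app[OF d h] .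
  thus ?thesis using sub y unfolding op_sub_def by auto
qed

lemma sa_sym:
  assumes sa: "self_adjoint ip A" and x: "x \<in> dom_op A" and y: "y \<in> dom_op A"
  shows "ip (app_op A x) y = ip x (app_op A y)"
proof -
  have d: "closure (dom_op A) = UNIV" using sa by (rule sa_dense)
  have sub: "op_sub A (adjoint_op ip A)" using sa by (simp add: self_adjoint_def op_eq_def)
  hence y': "y \<in> dom_op (adjoint_op ip A)" and e: "app_op A y = app_op (adjoint_op ip A) y"
    using y unfolding op_sub_def by auto
  obtain z where z: "\<forall>x\<in>dom_op A. ip (app_op A x) y = ip x z" using y' adj_dom by blast
  have "app_op A y = z" using e adj_app[OF d z] by simp
  thus ?thesis using z x by simp
qed

lemma sa_add:
  assumes sa: "self_adjoint ip A" and x: "x \<in> dom_op A" and y: "y \<in> dom_op A"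
  shows "x + y \<in> dom_op A \<and> app_op A (x + y) = app_op A x + app_op A y"
  apply (rule sa_char[OF sa])
  using sa_sym[OF sa _ x] sa_sym[OF sa _ y] by (simp add: ip_addr)

lemma sa_sc:
  assumes sa: "self_adjoint ip A" and x: "x \<in> dom_op A"
  shows "sc c x \<in> dom_op A \<and> app_op A (sc c x) = sc c (app_op A x)"
  apply (rule sa_char[OF sa])
  using sa_sym[OF sa _ x] by (simp add: ip_scr)

lemma sa_zero:
  assumes sa: "self_adjoint ip A"
  shows "0 \<in> dom_op A \<and> app_op A 0 = 0"
  by (rule sa_char[OF sa]) simp

lemma sa_minus:
  assumes sa: "self_adjoint ip A" and x: "x \<in> dom_op A"
  shows "- x \<in> dom_op A \<and> app_op A (- x) = - app_op A x"
  using sa_sc[OF sa x, of "-1"] by (simp add: sc_neg1)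

lemma sa_diff:
  assumes sa: "self_adjoint ip A" and x: "x \<in> dom_op A" and y: "y \<in> dom_op A"
  shows "x - y \<in> dom_op A \<and> app_op A (x - y) = app_op A x - app_op A y"
  using sa_add[OF sa x, of "-y"] sa_minus[OF sa y] by simp

lemma sa_real:
  assumes sa: "self_adjoint ip A" and x: "x \<in> dom_op A"
  shows "Im (ip (app_op A x) x) = 0"
proof -
  have "ip (app_op A x) x = cnj (ip (app_op A x) x)"
    using sa_sym[OF sa x x] ip_cnj by metis
  hence "Im (ip (app_op A x) x) = Im (cnj (ip (app_op A x) x))" by simp
  thus ?thesis by simp
qed

lemma sa_closed:
  assumes sa: "self_adjoint ip A" and xs: "\<forall>n. xs n \<in> dom_op A"
    and l1: "xs \<longlonglongrightarrow> x" and l2: "(\<lambda>n. app_op A (xs n)) \<longlonglongrightarrow> w"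
  shows "x \<in> dom_op A \<and> app_op A x = w"
proof (rule sa_char[OF sa], intro ballI)
  fix u assume u: "u \<in> dom_op A"
  have a: "(\<lambda>n. ip (app_op A u) (xs n)) \<longlonglongrightarrow> ip (app_op A u) x"
    using ip_tendsto[OF tendsto_const l1] .
  have b: "(\<lambda>n. ip u (app_op A (xs n))) \<longlonglongrightarrow> ip u w"
    using ip_tendsto[OF tendsto_const l2] .
  have "(\<lambda>n. ip (app_op A u) (xs n)) = (\<lambda>n. ip u (app_op A (xs n)))"
    using sa_sym[OF sa u] xs by auto
  thus "ip (app_op A u) x = ip u w" using a b LIMSEQ_unique by metis
qed

lemma norm_add_scaleR_sq:
  "(norm (u + s *\<^sub>R w))\<^sup>2 = (norm u)\<^sup>2 + s\<^sup>2 * (norm w)\<^sup>2 + 2 * s * Re (ip u w)"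
  using norm_add_sq[of u "s *\<^sub>R w"] by (simp add: ip_scaleR_r power_mult_distrib)

lemma parallelogram:
  fixes a b :: 'a
  shows "(norm (a + b))\<^sup>2 + (norm (a - b))\<^sup>2 = 2 * (norm a)\<^sup>2 + 2 * (norm b)\<^sup>2"
  using norm_add_sq[of a b] norm_add_sq[of a "-b"] ip_minus_r[of a b] by simp

lemma proj_full:
  assumes M0: "0 \<in> M" and Madd: "\<forall>x\<in>M. \<forall>y\<in>M. x + y \<in> M"
    and Msc: "\<forall>c. \<forall>x\<in>M. sc c x \<in> M"
    and cl: "closed M" and perp: "\<forall>z. (\<forall>m\<in>M. ip m z = 0) \<longrightarrow> z = 0"
  shows "z \<in> M"
proof -
  have Mne: "M \<noteq> {}" using M0 by blast
  define d where "d = infdist z M"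
  have dle: "\<And>m. m \<in> M \<Longrightarrow> d \<le> dist z m" using infdist_le d_def by simp
  have d0: "0 \<le> d" by (simp add: d_def infdist_nonneg)
  have scR: "t *\<^sub>R x \<in> M" if "x \<in> M" for t x
  proof -
    have "sc (complex_of_real t) x \<in> M" using Msc that by blast
    thus ?thesis by (simp add: sc_real)
  qed
  have ex: "\<forall>n. \<exists>r\<in>M. dist z r < d + inverse (real (Suc n))"
  proof
    fix n
    have lt: "Inf ((\<lambda>a. dist z a) ` M) < d + inverse (real (Suc n))"
      unfolding d_def infdist_notempty[OF Mne] by simp
    have "(\<lambda>a. dist z a) ` M \<noteq> {}" using Mne by simp
    from cInf_lessD[OF this lt] show "\<exists>r\<in>M. dist z r < d + inverse (real (Suc n))" by simp
  qed
  have "\<exists>r. \<forall>n. r n \<in> M \<and> dist z (r n) < d + inverse (real (Suc n))"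
    by (intro choice) (use ex in blast)
  then obtain r where r: "\<And>n. r n \<in> M"
    and rd: "\<And>n. dist z (r n) < d + inverse (real (Suc n))" by blast
  have key: "(norm (r n - r m))\<^sup>2 \<le> (4*d+2) * (inverse (real (Suc n)) + inverse (real (Suc m)))"
    for n m
  proof -
    define en where "en = inverse (real (Suc n))"
    define em where "em = inverse (real (Suc m))"
    have en: "0 < en" "en \<le> 1" unfolding en_def by (auto simp: field_simps)
    have em: "0 < em" "em \<le> 1" unfolding em_def by (auto simp: field_simps)
    let ?a = "z - r n" and ?b = "z - r m"
    have mid: "(1/2) *\<^sub>R (r n + r m) \<in> M" using scR Madd r by simp
    have "?a + ?b = 2 *\<^sub>R (z - (1/2) *\<^sub>R (r n + r m))" by (simp add: algebra_simps scaleR_2)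
    hence "norm (?a + ?b) = 2 * dist z ((1/2) *\<^sub>R (r n + r m))" by (simp add: dist_norm)
    hence ab: "2 * d \<le> norm (?a + ?b)" using dle[OF mid] by simp
    have ab2: "(2*d)\<^sup>2 \<le> (norm (?a + ?b))\<^sup>2" by (rule power_mono[OF ab]) (use d0 in simp)
    have na: "norm ?a < d + en" using rd[of n] by (simp add: dist_norm en_def)
    have nb: "norm ?b < d + em" using rd[of m] by (simp add: dist_norm em_def)
    have na2: "(norm ?a)\<^sup>2 \<le> (d + en)\<^sup>2" by (rule power_mono[OF less_imp_le[OF na]]) simp
    have nb2: "(norm ?b)\<^sup>2 \<le> (d + em)\<^sup>2" by (rule power_mono[OF less_imp_le[OF nb]]) simp
    have par: "(norm (?a + ?b))\<^sup>2 + (norm (?a - ?b))\<^sup>2 = 2 * (norm ?a)\<^sup>2 + 2 * (norm ?b)\<^sup>2"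
      by (rule parallelogram)
    have "?a - ?b = - (r n - r m)" by simp
    hence e: "norm (?a - ?b) = norm (r n - r m)" by (metis norm_minus_cancel)
    have "(norm (r n - r m))\<^sup>2 \<le> 2 * (d + en)\<^sup>2 + 2 * (d + em)\<^sup>2 - (2*d)\<^sup>2"
      using par e ab2 na2 nb2 by (simp only: e)
    also have "\<dots> = 4*d*en + 2*en*en + 4*d*em + 2*em*em" by (simp add: power2_eq_square algebra_simps)
    also have "\<dots> \<le> (4*d+2) * (en + em)"
    proof -
      have "en*en \<le> en" "em*em \<le> em" using en em by (simp_all add: mult_left_le)
      thus ?thesis by (simp add: algebra_simps)
    qed
    finally show ?thesis unfolding en_def em_def .
  qed
  have cauchy: "Cauchy r"
  proof (rule CauchyI)
    fix e :: real assume e: "0 < e"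
    obtain N :: nat where N: "(8*d+4) / e\<^sup>2 < real N" using reals_Archimedean2 by blast
    have "\<forall>m\<ge>N. \<forall>n\<ge>N. norm (r m - r n) < e"
    proof (intro allI impI)
      fix m n assume mN: "N \<le> m" and nN: "N \<le> n"
      have i1: "inverse (real (Suc m)) \<le> inverse (real (Suc N))" using mN
        by (simp add: le_imp_inverse_le)
      have i2: "inverse (real (Suc n)) \<le> inverse (real (Suc N))" using nN
        by (simp add: le_imp_inverse_le)
      have "(norm (r m - r n))\<^sup>2 \<le> (4*d+2) * (inverse (real (Suc m)) + inverse (real (Suc n)))"
        by (rule key)
      also have "\<dots> \<le> (4*d+2) * (2 * inverse (real (Suc N)))"
        using i1 i2 d0 by (intro mult_left_mono) linarith+
      also have "\<dots> = (8*d+4) / real (Suc N)" by (simp add: field_simps)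
      also have "\<dots> < e\<^sup>2"
      proof -
        have "(8*d+4) < e\<^sup>2 * real N" using N e by (simp add: field_simps)
        also have "\<dots> \<le> e\<^sup>2 * real (Suc N)" by (intro mult_left_mono) auto
        finally show ?thesis by (simp add: field_simps)
      qed
      finally have "(norm (r m - r n))\<^sup>2 < e\<^sup>2" .
      thus "norm (r m - r n) < e" using e power2_less_imp_less less_imp_le by blast
    qed
    thus "\<exists>M. \<forall>m\<ge>M. \<forall>n\<ge>M. norm (r m - r n) < e" by blast
  qed
  then obtain r0 where lim: "r \<longlonglongrightarrow> r0"
    using Cauchy_convergent_iff convergent_def by blast
  have r0M: "r0 \<in> M" using closed_sequentially[OF cl r lim] .
  have "dist z r0 \<le> d"
  proof (rule tendsto_le[OF trivial_limit_sequentially])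
    show "(\<lambda>n. d + inverse (real (Suc n))) \<longlonglongrightarrow> d" by (rule LIMSEQ_inverse_real_of_nat_add)
    show "(\<lambda>n. dist z (r n)) \<longlonglongrightarrow> dist z r0" by (intro tendsto_intros lim)
    show "\<forall>\<^sub>F n in sequentially. dist z (r n) \<le> d + inverse (real (Suc n))"
      using rd by (simp add: less_imp_le)
  qed
  define u where "u = z - r0"
  have nu: "norm u \<le> d" using \<open>dist z r0 \<le> d\<close> by (simp add: u_def dist_norm)
  have reo: "Re (ip u w) = 0" if w: "w \<in> M" for w
  proof -
    have "\<forall>s. 0 \<le> 2 * s * Re (ip u w) + s\<^sup>2 * (norm w)\<^sup>2"
    proof
      fix s :: real
      have "r0 + (-s) *\<^sub>R w \<in> M" using Madd r0M scR w by blast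
      hence "d \<le> dist z (r0 + (-s) *\<^sub>R w)" by (rule dle)
      also have "dist z (r0 + (-s) *\<^sub>R w) = norm (u + s *\<^sub>R w)"
        by (simp add: dist_norm u_def algebra_simps)
      finally have "norm u \<le> norm (u + s *\<^sub>R w)" using nu by linarith
      hence "(norm u)\<^sup>2 \<le> (norm (u + s *\<^sub>R w))\<^sup>2" by (simp add: power_mono)
      thus "0 \<le> 2 * s * Re (ip u w) + s\<^sup>2 * (norm w)\<^sup>2"
        by (simp add: norm_add_scaleR_sq)
    qed
    thus ?thesis by (rule quad_zero) simp
  qed
  have "\<forall>m\<in>M. ip m u = 0"
  proof
    fix w assume w: "w \<in> M"
    have "sc \<i> w \<in> M" using Msc w by blast
    hence "Re (ip u (sc \<i> w)) = 0" by (rule reo)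
    hence "Im (ip u w) = 0" by (simp add: Re_ip_sc_i)
    moreover have "Re (ip u w) = 0" using reo w .
    ultimately have "ip u w = 0" by (simp add: complex_eqI)
    thus "ip w u = 0" by (metis ip_cnj complex_cnj_zero)
  qed
  hence "u = 0" using perp by blast
  thus ?thesis using r0M by (simp add: u_def)
qed

lemma sa_norm_id:
  assumes sa: "self_adjoint ip A" and u: "u \<in> dom_op A"
  shows "(norm (app_op A u - sc \<i> u))\<^sup>2 = (norm (app_op A u))\<^sup>2 + (norm u)\<^sup>2"
proof -
  have "ip (app_op A u) (- sc \<i> u) = \<i> * ip (app_op A u) u"
    by (simp add: ip_minus_r ip_scr)
  hence "Re (ip (app_op A u) (- sc \<i> u)) = 0" using sa_real[OF sa u] by simp
  moreover have "norm (- sc \<i> u) = norm u" by (simp add: norm_sc)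
  ultimately show ?thesis using norm_add_sq[of "app_op A u" "- sc \<i> u"] by simp
qed

lemma sa_surj:
  assumes sa: "self_adjoint ip A"
  shows "\<exists>x\<in>dom_op A. app_op A x - sc \<i> x = y"
proof -
  define D where "D = dom_op A"
  define f where "f = (\<lambda>x. app_op A x - sc \<i> x)"
  define M where "M = f ` D"
  have "y \<in> M"
  proof (rule proj_full)
    show "0 \<in> M" unfolding M_def f_def D_def using sa_zero[OF sa]
      by (metis (no_types, lifting) diff_zero image_eqI sc_zero)
    show "\<forall>x\<in>M. \<forall>y\<in>M. x + y \<in> M"
    proof (intro ballI)
      fix a b assume "a \<in> M" "b \<in> M"
      then obtain x1 x2 where x: "x1 \<in> D" "x2 \<in> D" "a = f x1" "b = f x2" unfolding M_def by blast
      have "x1 + x2 \<in> D" "f (x1 + x2) = a + b"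
        using sa_add[OF sa, of x1 x2] x unfolding D_def f_def by (auto simp: sc_add)
      thus "a + b \<in> M" unfolding M_def by (metis image_eqI)
    qed
    show "\<forall>c. \<forall>x\<in>M. sc c x \<in> M"
    proof (intro allI ballI)
      fix c a assume "a \<in> M"
      then obtain x where x: "x \<in> D" "a = f x" unfolding M_def by blast
      have "sc c x \<in> D" "f (sc c x) = sc c a"
        using sa_sc[OF sa, of x c] x unfolding D_def f_def by (auto simp: sc_diff sc_comm)
      thus "sc c a \<in> M" unfolding M_def by (metis image_eqI)
    qed
    show "closed M"
      unfolding closed_sequential_limits
    proof (intro allI impI, elim conjE)
      fix v l assume vM: "\<forall>n. v n \<in> M" and vl: "v \<longlonglongrightarrow> l"
      have "\<forall>n. \<exists>x. x \<in> D \<and> v n = f x" using vM unfolding M_def by blast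
      then obtain xs where xs: "\<And>n. xs n \<in> D" and vx: "\<And>n. v n = f (xs n)" by metis
      have cv: "Cauchy v" using vl by (rule LIMSEQ_imp_Cauchy)
      have bnd: "norm (xs m - xs n) \<le> norm (v m - v n) \<and>
                 norm (app_op A (xs m) - app_op A (xs n)) \<le> norm (v m - v n)" for m n
      proof -
        have d: "xs m - xs n \<in> dom_op A"
          and e: "app_op A (xs m - xs n) = app_op A (xs m) - app_op A (xs n)"
          using sa_diff[OF sa, of "xs m" "xs n"] xs unfolding D_def by auto
        have "v m - v n = app_op A (xs m - xs n) - sc \<i> (xs m - xs n)"
          using vx e by (simp add: f_def sc_diff)
        hence "(norm (v m - v n))\<^sup>2 = (norm (app_op A (xs m) - app_op A (xs n)))\<^sup>2 + (norm (xs m - xs n))\<^sup>2"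
          using sa_norm_id[OF sa d] e by simp
        moreover have "0 \<le> (norm (app_op A (xs m) - app_op A (xs n)))\<^sup>2"
          "0 \<le> (norm (xs m - xs n))\<^sup>2" by simp_all
        ultimately have "(norm (xs m - xs n))\<^sup>2 \<le> (norm (v m - v n))\<^sup>2"
          "(norm (app_op A (xs m) - app_op A (xs n)))\<^sup>2 \<le> (norm (v m - v n))\<^sup>2"
          by linarith+
        thus ?thesis using power2_le_imp_le norm_ge_zero by blast
      qed
      have cx: "Cauchy xs"
      proof (rule CauchyI)
        fix e :: real assume "0 < e"
        from CauchyD[OF cv this] obtain N where "\<forall>m\<ge>N. \<forall>n\<ge>N. norm (v m - v n) < e" by blast
        thus "\<exists>N. \<forall>m\<ge>N. \<forall>n\<ge>N. norm (xs m - xs n) < e" using bnd by (meson le_less_trans)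
      qed
      have cA: "Cauchy (\<lambda>n. app_op A (xs n))"
      proof (rule CauchyI)
        fix e :: real assume "0 < e"
        from CauchyD[OF cv this] obtain N where "\<forall>m\<ge>N. \<forall>n\<ge>N. norm (v m - v n) < e" by blast
        thus "\<exists>N. \<forall>m\<ge>N. \<forall>n\<ge>N. norm (app_op A (xs m) - app_op A (xs n)) < e"
          using bnd by (meson le_less_trans)
      qed
      obtain x0 where x0: "xs \<longlonglongrightarrow> x0" using cx Cauchy_convergent_iff convergent_def by blast
      obtain w where w: "(\<lambda>n. app_op A (xs n)) \<longlonglongrightarrow> w"
        using cA Cauchy_convergent_iff convergent_def by blast
      have x0D: "x0 \<in> dom_op A" and Ax0: "app_op A x0 = w"
        using sa_closed[OF sa _ x0 w] xs unfolding D_def by auto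
      have "(\<lambda>n. app_op A (xs n) - sc \<i> (xs n)) \<longlonglongrightarrow> w - sc \<i> x0"
        by (intro tendsto_diff w bounded_linear.tendsto[OF bl_sc x0])
      moreover have "v = (\<lambda>n. app_op A (xs n) - sc \<i> (xs n))" using vx unfolding f_def by (intro ext) simp
      ultimately have "v \<longlonglongrightarrow> f x0" using Ax0 by (simp add: f_def)
      hence "l = f x0" using vl LIMSEQ_unique by blast
      thus "l \<in> M" using x0D unfolding M_def D_def by blast
    qed
    show "\<forall>z. (\<forall>m\<in>M. ip m z = 0) \<longrightarrow> z = 0"
    proof (intro allI impI)
      fix z assume h: "\<forall>m\<in>M. ip m z = 0"
      have "\<forall>x\<in>dom_op A. ip (app_op A x) z = ip x (sc (- \<i>) z)"
      proof
        fix x assume x: "x \<in> dom_op A"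
        have "ip (f x) z = 0" using h x unfolding M_def D_def by blast
        hence "ip (app_op A x) z = ip (sc \<i> x) z" by (simp add: f_def ip_diff_l)
        thus "ip (app_op A x) z = ip x (sc (- \<i>) z)" by (simp add: ip_scl ip_scr)
      qed
      from sa_char[OF sa this] have zD: "z \<in> dom_op A" and Az: "app_op A z = sc (- \<i>) z" by auto
      have "Im (ip (app_op A z) z) = 0" using sa_real[OF sa zD] .
      hence "Re (ip z z) = 0" using Az by (simp add: ip_scl)
      hence "ip z z = 0" by (simp add: ip_self)
      thus "z = 0" by (simp add: ip_self_zero)
    qed
  qed
  thus ?thesis unfolding M_def f_def D_def by blast
qed

lemma pos_zero:
  assumes pos: "positive_op ip P" and y: "y \<in> dom_op P" and h: "ip (app_op P y) y = 0"
  shows "app_op P y = 0"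
proof -
  have sa: "self_adjoint ip P" using pos by (simp add: positive_op_def)
  have nn: "\<And>x. x \<in> dom_op P \<Longrightarrow> 0 \<le> Re (ip (app_op P x) x)"
    using pos by (simp add: positive_op_def)
  have re: "Re (ip (app_op P y) w) = 0" if w: "w \<in> dom_op P" for w
  proof -
    have "\<forall>t. 0 \<le> 2 * t * Re (ip (app_op P y) w) + t\<^sup>2 * Re (ip (app_op P w) w)"
    proof
      fix t :: real
      have tw: "t *\<^sub>R w \<in> dom_op P" "app_op P (t *\<^sub>R w) = t *\<^sub>R app_op P w"
        using sa_sc[OF sa w, of "complex_of_real t"] by (auto simp: sc_real)
      have yt: "y + t *\<^sub>R w \<in> dom_op P" "app_op P (y + t *\<^sub>R w) = app_op P y + t *\<^sub>R app_op P w"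
        using sa_add[OF sa y tw(1)] tw by auto
      have "0 \<le> Re (ip (app_op P (y + t *\<^sub>R w)) (y + t *\<^sub>R w))" using nn[OF yt(1)] .
      also have "ip (app_op P (y + t *\<^sub>R w)) (y + t *\<^sub>R w) =
         ip (app_op P y) y + complex_of_real t * ip (app_op P y) w
         + complex_of_real t * ip (app_op P w) y + complex_of_real t * complex_of_real t * ip (app_op P w) w"
        unfolding yt(2) by (simp add: ip_addl ip_addr ip_scaleR_l ip_scaleR_r algebra_simps)
      also have "ip (app_op P w) y = cnj (ip (app_op P y) w)"
        using sa_sym[OF sa w y] sa_sym[OF sa y w] ip_cnj by metis
      finally show "0 \<le> 2 * t * Re (ip (app_op P y) w) + t\<^sup>2 * Re (ip (app_op P w) w)"
        using h by (simp add: power2_eq_square)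
    qed
    thus ?thesis using quad_zero nn[OF w] by blast
  qed
  have "\<forall>w\<in>dom_op P. ip (app_op P y) w = 0"
  proof
    fix w assume w: "w \<in> dom_op P"
    have "sc \<i> w \<in> dom_op P" using sa_sc[OF sa w] by blast
    from re[OF this] have "Im (ip (app_op P y) w) = 0" by (simp add: Re_ip_sc_i)
    with re[OF w] show "ip (app_op P y) w = 0" by (simp add: complex_eqI)
  qed
  thus ?thesis using dense_zero[OF sa_dense[OF sa]] by blast
qed

end
lemma dom_comp: "dom_op (comp_op S R) = {x \<in> dom_op R. app_op R x \<in> dom_op S}"
  by (simp add: comp_op_def dom_op_def app_op_def)

lemma app_comp: "app_op (comp_op S R) x = app_op S (app_op R x)"
  by (simp add: comp_op_def app_op_def)

theorem theorem2p8:
  fixes sc :: "complex \<Rightarrow> 'a::banach \<Rightarrow> 'a"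
    and ip :: "'a \<Rightarrow> 'a \<Rightarrow> complex"
    and A B T :: "'a opr"
  assumes H: "complex_hilbert sc ip"
    and sa_A: "self_adjoint ip A" and sa_B: "self_adjoint ip B"
    and pos: "positive_op ip A \<or> positive_op ip B"
    and dom_eq: "dom_op A = dom_op B"
    and dom_incl: "dom_op (comp_op B A) \<subseteq> dom_op (comp_op A B)"
    and T_def: "T = (dom_op A, \<lambda>x. app_op A x + sc \<i> (app_op B x))"
    and T2: "\<forall>x \<in> dom_op (comp_op T T). app_op (comp_op T T) x = 0"
  shows "bounded_everywhere T \<and> normal_op ip T \<and> (\<forall>x. x \<in> dom_op T \<and> app_op T x = 0)"
proof -
  interpret chs sc ip using H by (simp add: chs_def)
  define D where "D = dom_op A"
  have DB: "dom_op B = D" using dom_eq D_def by simp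
  have domT: "dom_op T = D" using T_def D_def by (simp add: dom_op_def)
  have appT: "\<And>x. app_op T x = app_op A x + sc \<i> (app_op B x)" using T_def by (simp add: app_op_def)
  have posl: "app_op A y = 0 \<and> app_op B y = 0"
    if y: "y \<in> D" and e: "app_op A y + sc \<i> (app_op B y) = 0" for y
  proof -
    have yA: "y \<in> dom_op A" and yB: "y \<in> dom_op B" using y DB D_def by auto
    have Ay: "app_op A y = - sc \<i> (app_op B y)" using e by (simp add: eq_neg_iff_add_eq_0)
    have a: "Im (ip (app_op A y) y) = 0" using sa_real[OF sa_A yA] .
    have b: "Im (ip (app_op B y) y) = 0" using sa_real[OF sa_B yB] .
    have "ip (app_op A y) y = - \<i> * ip (app_op B y) y" using Ay by (simp add: ip_minus_l ip_scl)
    hence "Re (ip (app_op B y) y) = 0" using a by simp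
    hence bz: "ip (app_op B y) y = 0" using b by (simp add: complex_eqI)
    hence az: "ip (app_op A y) y = 0" using Ay by (simp add: ip_minus_l ip_scl)
    show ?thesis using pos
    proof
      assume pA: "positive_op ip A"
      have A0: "app_op A y = 0" using pos_zero[OF pA yA az] .
      hence "sc \<i> (app_op B y) = 0" using e by simp
      hence "sc (- \<i>) (sc \<i> (app_op B y)) = 0" by simp
      hence "app_op B y = 0" by (simp add: sc_mult[symmetric])
      thus ?thesis using A0 by simp
    next
      assume pB: "positive_op ip B"
      have B0: "app_op B y = 0" using pos_zero[OF pB yB bz] .
      thus ?thesis using Ay by simp
    qed
  qed
  have step1: "app_op A x = 0 \<and> app_op B x = 0" if x: "x \<in> D" and Ax: "app_op A x \<in> D" for x
  proof -
    have "x \<in> dom_op (comp_op B A)" using x Ax DB D_def by (simp add: dom_comp)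
    hence "x \<in> dom_op (comp_op A B)" using dom_incl by blast
    hence Bx: "app_op B x \<in> D" by (simp add: dom_comp D_def)
    define y where "y = app_op A x + sc \<i> (app_op B x)"
    have yD: "y \<in> D" using sa_add[OF sa_A] sa_sc[OF sa_A] Ax Bx unfolding y_def D_def by blast
    have "x \<in> dom_op (comp_op T T)" using x yD by (simp add: dom_comp domT appT y_def)
    hence "app_op T y = 0" using T2 by (simp add: app_comp appT y_def)
    hence yz: "app_op A y = 0 \<and> app_op B y = 0" using posl[OF yD] by (simp add: appT)
    have xA: "x \<in> dom_op A" and xB: "x \<in> dom_op B" and yA: "y \<in> dom_op A" and yB: "y \<in> dom_op B"
      using x yD DB D_def by auto
    have "ip y y = ip (app_op A x) y + \<i> * ip (app_op B x) y"
      by (simp add: y_def ip_addl ip_scl)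
    also have "\<dots> = ip x (app_op A y) + \<i> * ip x (app_op B y)"
      using sa_sym[OF sa_A xA yA] sa_sym[OF sa_B xB yB] by simp
    also have "\<dots> = 0" using yz by simp
    finally have "y = 0" by (simp add: ip_self_zero)
    thus ?thesis using posl[OF x] by (simp add: y_def)
  qed
  have step2: "app_op A y = 0 \<and> app_op B y = 0" if y: "y \<in> D" for y
  proof -
    obtain x where xA: "x \<in> dom_op A" and ex: "app_op A x - sc \<i> x = y" using sa_surj[OF sa_A] by blast
    have xD: "x \<in> D" and xB: "x \<in> dom_op B" using xA DB D_def by auto
    have "app_op A x = y + sc \<i> x" using ex by (simp add: algebra_simps)
    moreover have "y + sc \<i> x \<in> D" using sa_add[OF sa_A] sa_sc[OF sa_A] y xA D_def by blast
    ultimately have z: "app_op A x = 0 \<and> app_op B x = 0" using step1[OF xD] by simp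
    have yx: "y = - sc \<i> x" using ex z by (simp add: algebra_simps)
    have "app_op A y = - sc \<i> (app_op A x)"
      using sa_minus[OF sa_A] sa_sc[OF sa_A xA] yx by metis
    moreover have "app_op B y = - sc \<i> (app_op B x)"
      using sa_minus[OF sa_B] sa_sc[OF sa_B xB] yx by metis
    ultimately show ?thesis using z by simp
  qed
  have DU: "D = UNIV"
  proof -
    have "z \<in> D" for z
    proof -
      have "\<forall>x\<in>dom_op A. ip (app_op A x) z = ip x 0" using step2 D_def by simp
      thus ?thesis using sa_char[OF sa_A] D_def by blast
    qed
    thus ?thesis by blast
  qed
  have T0: "app_op T x = 0" for x using step2[of x] DU by (simp add: appT)
  have domT': "dom_op T = UNIV" using domT DU by simp
  define Ta where "Ta = adjoint_op ip T"
  have dT: "closure (dom_op T) = UNIV" using domT' by simp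
  have domTa: "dom_op Ta = UNIV"
  proof -
    have "y \<in> dom_op Ta" for y
    proof -
      have "\<forall>x\<in>dom_op T. ip (app_op T x) y = ip x 0" by (simp add: T0)
      thus ?thesis unfolding Ta_def using adj_dom[of y T] by blast
    qed
    thus ?thesis by blast
  qed
  have Ta0: "app_op Ta y = 0" for y
    unfolding Ta_def by (rule adj_app[OF dT]) (simp add: T0)
  have bnd: "bounded_everywhere T"
    unfolding bounded_everywhere_def using domT' T0 by (auto intro: exI[of _ 0])
  have gr: "{(x, app_op T x) | x. x \<in> dom_op T} = UNIV \<times> {0}" using T0 domT' by auto
  have cl: "closed_op T" unfolding closed_op_def gr by (simp add: closed_Times)
  have dd: "densely_defined T" unfolding densely_defined_def using domT' by simp
  have eq: "op_eq (comp_op T Ta) (comp_op Ta T)"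
    unfolding op_eq_def op_sub_def by (simp add: dom_comp app_comp domT' domTa T0 Ta0)
  have nrm: "normal_op ip T" unfolding normal_op_def using cl dd eq Ta_def by simp
  show ?thesis using bnd nrm domT' T0 by simp
qed

end
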